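(* Let $\Omega=(a,b)$, $1<p<\infty$, $k\ge1$, and $m,n$ measurable on $(a,b)$ with $0<\theta_-\le m,n\le\theta_+$. Fix a sign $\pm$, let $s>0$, $(\alpha(s),\beta(s))=(s^{-1}c^\pm_{k+1}(s),c^\pm_{k+1}(s))\in\mathcal{C}^\pm_k(m,n)$, and let $u\in W^{1,p}_0(a,b)$ be a nontrivial weak solution of $-(|u'|^{p-2}u')'=\alpha(s)m(u^+)^{p-1}-\beta(s)n(u^-)^{p-1}$ on $(a,b)$, $u(a)=u(b)=0$. Let $I_+$ be a nodal domain (maximal open interval) of $u$ on which $u>0$ and $I_-$ one on which $u<0$. Then $$\mu_1(I_+)\le C\gamma(s),\qquad \mu_1(I_-)\le Cs\gamma(s),$$ where $C=\frac{\theta_+}{\theta_-}\mu_{k+1}(\Omega)$, $\gamma(s)=1$ for $s\ge1$, $\gamma(s)=s^{-1}$ for $s<1$, $\mu_1(I)$ is the first Dirichlet eigenvalue of the one-dimensional $p$-Laplacian on $I$, and $\mu_{k+1}(\Omega)=\pi_p^p(k+1)^p(b-a)^{-p}$.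
   Context: $u^\pm=\max\{\pm u,0\}$. For an interval $I$ and weight $r$, $\lambda_1(r,I)=\inf\{\int_I|v'|^p/\int_I r|v|^p:\ v\in W^{1,p}_0(I)\setminus\{0\}\}$; $\mu_1(I)=\lambda_1(1,I)=\pi_p^p|I|^{-p}$ with $\pi_p=2(p-1)^{1/p}\int_0^1(1-t^p)^{-1/p}dt$. A partition in $\mathcal{P}_{k+1}$ is $a=t_0<\dots<t_{k+1}=b$, $I_j=(t_{j-1},t_j)$. $c^+_{k+1}(s)=\inf_{\mathcal{P}_{k+1}}\max\big(\{s\lambda_1(m,I_j): j\text{ odd}\}\cup\{\lambda_1(n,I_j): j\text{ even}\}\big)$ and $c^-_{k+1}(s)$ likewise with "odd" and "even" interchanged. $\mathcal{C}^\pm_k(m,n)$ is the Fučík curve whose eigenfunctions have $k$ interior zeros and positive (resp. negative) slope at $a$; $(s^{-1}c^\pm_{k+1}(s),c^\pm_{k+1}(s))$ is its intersection with the line $\beta=s\alpha$. *)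

theory Defs
  imports "HOL-Analysis.Analysis"
begin

(* v \<in> W^{1,p}_0(c,d) with weak derivative g (1D: absolutely continuous
   representative with L^p derivative and zero boundary values) *)
definition w1p0 :: "real \<Rightarrow> real \<Rightarrow> real \<Rightarrow> (real \<Rightarrow> real) \<Rightarrow> (real \<Rightarrow> real) \<Rightarrow> bool" where
  "w1p0 p c d v g \<longleftrightarrow>
     set_integrable lborel {c..d} g \<and>
     set_integrable lborel {c..d} (\<lambda>t. \<bar>g t\<bar> powr p) \<and>
     (\<forall>x\<in>{c..d}. v x = (LINT t:{c..x}|lborel. g t)) \<and>
     v c = 0 \<and> v d = 0"

definition lambda1 :: "real \<Rightarrow> (real \<Rightarrow> real) \<Rightarrow> real \<Rightarrow> real \<Rightarrow> real" where
  "lambda1 p r c d = Inf {(LINT t:{c..d}|lborel. \<bar>g t\<bar> powr p) /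
                          (LINT t:{c..d}|lborel. r t * \<bar>v t\<bar> powr p) | v g.
                          w1p0 p c d v g \<and> (\<exists>x\<in>{c<..<d}. v x \<noteq> 0)}"

definition pi_p :: "real \<Rightarrow> real" where
  "pi_p p = 2 * (p - 1) powr (1 / p) * (LINT t:{0..1}|lborel. (1 - t powr p) powr (- 1 / p))"

(* mu_1(I) = pi_p^p |I|^{-p}, as a function of the length L = |I| *)
definition mu1 :: "real \<Rightarrow> real \<Rightarrow> real" where
  "mu1 p L = pi_p p powr p * L powr (- p)"

definition partition :: "real \<Rightarrow> real \<Rightarrow> nat \<Rightarrow> (nat \<Rightarrow> real) \<Rightarrow> bool" where
  "partition a b k t \<longleftrightarrow> t 0 = a \<and> t (Suc k) = b \<and> (\<forall>j\<le>k. t j < t (Suc j))"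

(* c^+_{k+1}(s) if pos = True, c^-_{k+1}(s) if pos = False *)
definition cpm :: "bool \<Rightarrow> real \<Rightarrow> (real \<Rightarrow> real) \<Rightarrow> (real \<Rightarrow> real) \<Rightarrow> real \<Rightarrow> real \<Rightarrow> nat \<Rightarrow> real \<Rightarrow> real" where
  "cpm pos p m n a b k s = Inf ((\<lambda>t. Max ((\<lambda>j. if odd j = pos then s * lambda1 p m (t (j - 1)) (t j)
                                                 else lambda1 p n (t (j - 1)) (t j)) ` {1..Suc k}))
                              ` {t. partition a b k t})"

definition nodal_domain :: "bool \<Rightarrow> (real \<Rightarrow> real) \<Rightarrow> real \<Rightarrow> real \<Rightarrow> real \<Rightarrow> real \<Rightarrow> bool" where
  "nodal_domain sg u a b c d \<longleftrightarrow> c < d \<and> a \<le> c \<and> d \<le> b \<and>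
     (\<forall>x\<in>{c<..<d}. if sg then u x > 0 else u x < 0) \<and>
     (\<forall>c' d'. c' \<le> c \<longrightarrow> d \<le> d' \<longrightarrow> a \<le> c' \<longrightarrow> d' \<le> b \<longrightarrow>
        (\<forall>x\<in>{c'<..<d'}. if sg then u x > 0 else u x < 0) \<longrightarrow> c' = c \<and> d' = d)"

definition gamma :: "real \<Rightarrow> real" where
  "gamma s = (if s \<ge> 1 then 1 else 1 / s)"

end

theory Submission
  imports Defs
begin

lemma w1p0_integrable_on:
  assumes "w1p0 p c d v g"
  shows "g integrable_on {c..d}"
  using assms set_borel_integral_eq_integral(1) unfolding w1p0_def by blast

lemma w1p0_integral:
  assumes "w1p0 p c d v g" "x \<in> {c..d}"
  shows "v x = integral {c..x} g"
proof -
  have si: "set_integrable lborel {c..d} g" using assms unfolding w1p0_def by auto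
  have "set_integrable lborel {c..x} g"
    by (rule set_integrable_subset[OF si]) (use assms in auto)
  then show "v x = integral {c..x} g" using assms set_borel_integral_eq_integral(2) unfolding w1p0_def by metis
qed

lemma w1p0_cont:
  assumes "w1p0 p c d v g"
  shows "continuous_on {c..d} v"
proof -
  have "continuous_on {c..d} (\<lambda>x. integral {c..x} g)"
    using indefinite_integral_continuous_1 w1p0_integrable_on[OF assms] by blast
  then show ?thesis
    by (rule continuous_on_cong[THEN iffD1, rotated 2]) (use w1p0_integral[OF assms] in auto)
qed

lemma cont_abs_powr:
  fixes f :: "'a::topological_space \<Rightarrow> real"
  assumes "continuous_on S f" "0 < p"
  shows "continuous_on S (\<lambda>x. \<bar>f x\<bar> powr p)"
  using continuous_on_powr'[of S "\<lambda>x. \<bar>f x\<bar>" "\<lambda>x. p"] assms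
  by (auto intro: continuous_intros)

lemma w1p0_pos:
  assumes "w1p0 p c d v g" "0 < p" "lo \<in> {c<..<d}" "v lo \<noteq> 0"
  shows "set_integrable lborel {c..d} (\<lambda>t. \<bar>v t\<bar> powr p)"
    "0 < (LINT t:{c..d}|lborel. \<bar>v t\<bar> powr p)"
proof -
  have cont: "continuous_on {c..d} (\<lambda>t. \<bar>v t\<bar> powr p)"
    using cont_abs_powr[OF w1p0_cont[OF assms(1)] assms(2)] .
  show si: "set_integrable lborel {c..d} (\<lambda>t. \<bar>v t\<bar> powr p)"
    using borel_integrable_atLeastAtMost'[OF cont] .
  have eq: "(LINT t:{c..d}|lborel. \<bar>v t\<bar> powr p) = integral {c..d} (\<lambda>t. \<bar>v t\<bar> powr p)"
    using set_borel_integral_eq_integral(2)[OF si] .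
  have "integral {c..d} (\<lambda>t. \<bar>v t\<bar> powr p) \<ge> 0"
    by (rule integral_nonneg) (use integrable_continuous_interval[OF cont] in auto)
  moreover have "integral {c..d} (\<lambda>t. \<bar>v t\<bar> powr p) \<noteq> 0"
    using integral_eq_0_iff[OF cont] assms(3,4) by fastforce
  ultimately show "0 < (LINT t:{c..d}|lborel. \<bar>v t\<bar> powr p)" using eq by linarith
qed

lemma w1p0_witness:
  assumes "c < d" "0 < p"
  shows "\<exists>v g. w1p0 p c d v g \<and> (\<exists>x\<in>{c<..<d}. v x \<noteq> 0)"
proof -
  define v where "v = (\<lambda>t::real. (t - c) * (d - t))"
  define g where "g = (\<lambda>t::real. c + d - 2 * t)"
  have cg: "continuous_on S g" for S unfolding g_def by (intro continuous_intros)
  have "w1p0 p c d v g"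
    unfolding w1p0_def
  proof (intro conjI ballI)
    show "set_integrable lborel {c..d} g" using borel_integrable_atLeastAtMost'[OF cg] .
    show "set_integrable lborel {c..d} (\<lambda>t. \<bar>g t\<bar> powr p)"
      using borel_integrable_atLeastAtMost'[OF cont_abs_powr[OF cg assms(2)]] .
    show "v c = 0" "v d = 0" unfolding v_def by auto
    fix x assume x: "x \<in> {c..d}"
    have "(LINT t:{c..x}|lborel. g t) = integral\<^sup>L lborel (\<lambda>t. indicator {c..x} t *\<^sub>R g t)"
      unfolding set_lebesgue_integral_def ..
    also have "\<dots> = v x - v c"
      by (rule integral_FTC_atLeastAtMost) (use x cg in \<open>auto simp: v_def g_def intro!: derivative_eq_intros\<close>)
    finally show "v x = (LINT t:{c..x}|lborel. g t)" by (simp add: v_def)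
  qed
  moreover have "(c+d)/2 \<in> {c<..<d}" "v ((c+d)/2) \<noteq> 0" using assms unfolding v_def by auto
  ultimately show ?thesis by blast
qed

lemma indicator_affine:
  assumes "0 < (h::real)"
  shows "indicator {\<alpha> + h*lo .. \<alpha> + h*hi} (\<alpha> + h*t) = (indicator {lo..hi} t :: real)"
  using assms by (auto simp: indicator_def)

lemma affine_set_integral:
  fixes F :: "real \<Rightarrow> real"
  assumes "0 < h"
  shows "(LINT t:{lo..hi}|lborel. F (\<alpha> + h*t)) = (LINT y:{\<alpha> + h*lo .. \<alpha> + h*hi}|lborel. F y) / h"
proof -
  have "(LINT y:{\<alpha> + h*lo .. \<alpha> + h*hi}|lborel. F y) =
      \<bar>h\<bar> *\<^sub>R (\<integral>t. (\<lambda>y. indicator {\<alpha> + h*lo .. \<alpha> + h*hi} y *\<^sub>R F y) (\<alpha> + h*t) \<partial>lborel)"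
    unfolding set_lebesgue_integral_def
    by (rule lborel_integral_real_affine) (use assms in auto)
  also have "\<dots> = h * (LINT t:{lo..hi}|lborel. F (\<alpha> + h*t))"
    unfolding set_lebesgue_integral_def using assms by (simp add: indicator_affine)
  finally show ?thesis using assms by simp
qed

lemma affine_set_integrable:
  fixes F :: "real \<Rightarrow> real"
  assumes "0 < h"
  shows "set_integrable lborel {lo..hi} (\<lambda>t. F (\<alpha> + h*t)) \<longleftrightarrow> set_integrable lborel {\<alpha> + h*lo .. \<alpha> + h*hi} F"
proof -
  have "set_integrable lborel {\<alpha> + h*lo .. \<alpha> + h*hi} F \<longleftrightarrow>
      integrable lborel (\<lambda>t. (\<lambda>y. indicator {\<alpha> + h*lo .. \<alpha> + h*hi} y *\<^sub>R F y) (\<alpha> + h*t))"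
    unfolding set_integrable_def
    by (rule lborel_integrable_real_affine_iff[symmetric]) (use assms in auto)
  then show ?thesis unfolding set_integrable_def using assms by (simp add: indicator_affine)
qed


lemma AE_not_endpoints: "AE x in lborel. x \<noteq> (c::real) \<and> x \<noteq> d"
  using AE_lborel_singleton[of c] AE_lborel_singleton[of d] by eventually_elim auto

lemma ratio_nonneg:
  fixes c d p :: real and r v g :: "real \<Rightarrow> real"
  assumes "\<forall>x\<in>{c<..<d}. 0 \<le> r x"
  shows "0 \<le> (LINT t:{c..d}|lborel. \<bar>g t\<bar> powr p) / (LINT t:{c..d}|lborel. r t * \<bar>v t\<bar> powr p)"
proof -
  have "0 \<le> (LINT t:{c..d}|lborel. \<bar>g t\<bar> powr p)"
    unfolding set_lebesgue_integral_def by (intro integral_nonneg_AE AE_I2) (simp add: indicator_def)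
  moreover have "0 \<le> (LINT t:{c..d}|lborel. r t * \<bar>v t\<bar> powr p)"
    unfolding set_lebesgue_integral_def
  proof (rule integral_nonneg_AE)
    show "AE x in lborel. 0 \<le> indicator {c..d} x *\<^sub>R (r x * \<bar>v x\<bar> powr p)"
      using AE_not_endpoints[of c d]
    proof eventually_elim
      case (elim x) then show ?case using assms by (auto simp: indicator_def)
    qed
  qed
  ultimately show ?thesis by simp
qed

lemma lambda1_lower:
  assumes "w1p0 p c d v g" "\<exists>x\<in>{c<..<d}. v x \<noteq> 0" "\<forall>x\<in>{c<..<d}. 0 \<le> r x"
  shows "lambda1 p r c d \<le> (LINT t:{c..d}|lborel. \<bar>g t\<bar> powr p) / (LINT t:{c..d}|lborel. r t * \<bar>v t\<bar> powr p)"
  unfolding lambda1_def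
proof (rule cInf_lower)
  show "bdd_below {(LINT t:{c..d}|lborel. \<bar>g t\<bar> powr p) / (LINT t:{c..d}|lborel. r t * \<bar>v t\<bar> powr p) | v g.
                          w1p0 p c d v g \<and> (\<exists>x\<in>{c<..<d}. v x \<noteq> 0)}"
    by (rule bdd_belowI[of _ 0]) (use ratio_nonneg[OF assms(3)] in auto)
qed (use assms in blast)

lemma lambda1_greatest:
  assumes "c < d" "0 < p"
    and "\<And>v g. w1p0 p c d v g \<Longrightarrow> (\<exists>x\<in>{c<..<d}. v x \<noteq> 0) \<Longrightarrow>
       K \<le> (LINT t:{c..d}|lborel. \<bar>g t\<bar> powr p) / (LINT t:{c..d}|lborel. r t * \<bar>v t\<bar> powr p)"
  shows "K \<le> lambda1 p r c d"
  unfolding lambda1_def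
  by (rule cInf_greatest) (use assms w1p0_witness[OF assms(1,2)] in auto)

lemma lambda1_nonneg:
  assumes "c < d" "0 < p" "\<forall>x\<in>{c<..<d}. 0 \<le> r x"
  shows "0 \<le> lambda1 p r c d"
  by (rule lambda1_greatest) (use assms ratio_nonneg[OF assms(3)] in auto)


lemma abs_mult_powr: "0 \<le> h \<Longrightarrow> \<bar>h * y\<bar> powr p = h powr p * \<bar>y\<bar> powr (p::real)"
  by (simp add: abs_mult powr_mult)

lemma lambda1_scale:
  fixes c d c' d' p :: real
  assumes "c < d" "c' < d'" "0 < p"
  shows "lambda1 p (\<lambda>_. 1) c d * (d - c) powr p \<le> lambda1 p (\<lambda>_. 1) c' d' * (d' - c') powr p"
proof -
  define h where "h = (d' - c') / (d - c)"
  define \<alpha> where "\<alpha> = c' - h * c"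
  have h: "0 < h" unfolding h_def using assms by auto
  have e1: "\<alpha> + h * c = c'" unfolding \<alpha>_def by simp
  have hd: "h * (d - c) = d' - c'" unfolding h_def using assms by simp
  have e2: "\<alpha> + h * d = d'" unfolding \<alpha>_def using hd by (simp add: algebra_simps)
  have key: "lambda1 p (\<lambda>_. 1) c d \<le> h powr p * ((LINT t:{c'..d'}|lborel. \<bar>g t\<bar> powr p) /
        (LINT t:{c'..d'}|lborel. 1 * \<bar>v t\<bar> powr p))"
    if V: "w1p0 p c' d' v g" and Vx: "\<exists>x\<in>{c'<..<d'}. v x \<noteq> 0" for v g
  proof -
    define w where "w = (\<lambda>t. v (\<alpha> + h * t))"
    define G where "G = (\<lambda>t. h * g (\<alpha> + h * t))"
    have gi: "set_integrable lborel {c'..d'} g" and gpi: "set_integrable lborel {c'..d'} (\<lambda>t. \<bar>g t\<bar> powr p)"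
      using V unfolding w1p0_def by auto
    have Gp: "(\<lambda>t. \<bar>G t\<bar> powr p) = (\<lambda>t. h powr p * \<bar>g (\<alpha> + h * t)\<bar> powr p)"
      unfolding G_def using h by (simp add: abs_mult_powr)
    have W: "w1p0 p c d w G"
      unfolding w1p0_def
    proof (intro conjI ballI)
      have "set_integrable lborel {c..d} (\<lambda>t. g (\<alpha> + h * t))"
        using affine_set_integrable[OF h, where lo=c and hi=d and F=g and \<alpha>=\<alpha>] gi e1 e2 by simp
      then show "set_integrable lborel {c..d} G"
        unfolding G_def by (rule set_integrable_mult_right)
      have "set_integrable lborel {c..d} (\<lambda>t. \<bar>g (\<alpha> + h * t)\<bar> powr p)"
        using affine_set_integrable[OF h, where lo=c and hi=d and F="\<lambda>y. \<bar>g y\<bar> powr p" and \<alpha>=\<alpha>] gpi e1 e2 by simp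
      then show "set_integrable lborel {c..d} (\<lambda>t. \<bar>G t\<bar> powr p)"
        unfolding Gp by (rule set_integrable_mult_right)
      show "w c = 0" "w d = 0" unfolding w_def using e1 e2 V unfolding w1p0_def by auto
      fix x assume x: "x \<in> {c..d}"
      have xi: "\<alpha> + h * x \<in> {c'..d'}"
        using x h e1 e2 mult_left_mono[of c x h] mult_left_mono[of x d h] by auto
      have "(LINT t:{c..x}|lborel. G t) = h * (LINT t:{c..x}|lborel. g (\<alpha> + h * t))"
        unfolding G_def by simp
      also have "\<dots> = (LINT y:{\<alpha> + h * c..\<alpha> + h * x}|lborel. g y)"
        using affine_set_integral[OF h, where F=g and \<alpha>=\<alpha> and lo=c and hi=x] h by simp
      also have "\<dots> = v (\<alpha> + h * x)"
        using V xi e1 unfolding w1p0_def by auto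
      finally show "w x = (LINT t:{c..x}|lborel. G t)" unfolding w_def by simp
    qed
    have Wx: "\<exists>x\<in>{c<..<d}. w x \<noteq> 0"
    proof -
      obtain x' where x': "x' \<in> {c'<..<d'}" "v x' \<noteq> 0" using Vx by blast
      define t where "t = (x' - \<alpha>) / h"
      have "\<alpha> + h * t = x'" unfolding t_def using h by simp
      moreover have "t \<in> {c<..<d}"
        using x' h e1 e2 unfolding t_def by (auto simp: field_simps)
      ultimately show ?thesis using x' unfolding w_def by auto
    qed
    have N: "(LINT t:{c..d}|lborel. \<bar>G t\<bar> powr p) = h powr p * ((LINT y:{c'..d'}|lborel. \<bar>g y\<bar> powr p) / h)"
      unfolding Gp using affine_set_integral[OF h, where F="\<lambda>y. \<bar>g y\<bar> powr p" and \<alpha>=\<alpha> and lo=c and hi=d] e1 e2 by simp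
    have D: "(LINT t:{c..d}|lborel. 1 * \<bar>w t\<bar> powr p) = (LINT y:{c'..d'}|lborel. 1 * \<bar>v y\<bar> powr p) / h"
      unfolding w_def using affine_set_integral[OF h, where F="\<lambda>y. 1 * \<bar>v y\<bar> powr p" and \<alpha>=\<alpha> and lo=c and hi=d] e1 e2 by simp
    have "lambda1 p (\<lambda>_. 1) c d \<le> (LINT t:{c..d}|lborel. \<bar>G t\<bar> powr p) / (LINT t:{c..d}|lborel. 1 * \<bar>w t\<bar> powr p)"
      using lambda1_lower[OF W Wx, of "\<lambda>_. 1"] by simp
    also have "\<dots> = h powr p * ((LINT t:{c'..d'}|lborel. \<bar>g t\<bar> powr p) /
        (LINT t:{c'..d'}|lborel. 1 * \<bar>v t\<bar> powr p))"
      unfolding N D using h by (simp add: field_simps)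
    finally show ?thesis .
  qed
  have hp: "0 < h powr p" using h by simp
  have L: "lambda1 p (\<lambda>_. 1) c d / h powr p \<le> lambda1 p (\<lambda>_. 1) c' d'"
  proof (rule lambda1_greatest[OF assms(2,3)])
    fix v g assume "w1p0 p c' d' v g" "\<exists>x\<in>{c'<..<d'}. v x \<noteq> 0"
    from key[OF this] hp show "lambda1 p (\<lambda>_. 1) c d / h powr p \<le> (LINT t:{c'..d'}|lborel. \<bar>g t\<bar> powr p) /
        (LINT t:{c'..d'}|lborel. (\<lambda>_. 1) t * \<bar>v t\<bar> powr p)"
      by (simp add: pos_divide_le_eq mult.commute)
  qed
  moreover have "h powr p * (d - c) powr p = (d' - c') powr p"
    unfolding h_def using assms by (simp add: powr_mult[symmetric])
  moreover have "0 \<le> (d' - c') powr p" by simp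
  ultimately have "lambda1 p (\<lambda>_. 1) c d / h powr p * (d' - c') powr p \<le> lambda1 p (\<lambda>_. 1) c' d' * (d' - c') powr p"
    using mult_right_mono[OF L] by blast
  moreover have "lambda1 p (\<lambda>_. 1) c d / h powr p * (d' - c') powr p = lambda1 p (\<lambda>_. 1) c d * (d - c) powr p"
    using hp \<open>h powr p * (d - c) powr p = (d' - c') powr p\<close> by (simp add: field_simps)
  ultimately show ?thesis by simp
qed


lemma young_pt:
  fixes y M p :: real
  assumes "1 < p" "0 < M"
  shows "\<bar>y\<bar> \<le> \<bar>y\<bar> powr p / (p * M powr (p - 1)) + M * (p - 1) / p"
proof -
  define q where "q = p / (p - 1)"
  have q: "1 < q" "1/p + 1/q = 1" using assms unfolding q_def by (auto simp: field_simps)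
  have "\<bar>y\<bar> / M * 1 \<le> (\<bar>y\<bar> / M) powr p / p + 1 powr q / q"
    by (rule Youngs_inequality) (use assms q in auto)
  then have "\<bar>y\<bar> \<le> M * ((\<bar>y\<bar> / M) powr p / p + 1 / q)"
    using assms by (simp add: field_simps)
  also have "\<dots> = \<bar>y\<bar> powr p / (p * M powr (p - 1)) + M * (p - 1) / p"
    using assms unfolding q_def by (simp add: powr_divide powr_diff field_simps)
  finally show ?thesis .
qed

lemma const_set_integral01: "(LINT t:{0..1::real}|lborel. (C::real)) = C"
  by (subst set_integral_const) auto

lemma const_set_integrable: "set_integrable lborel {a..b::real} (\<lambda>_. C::real)"
  by (rule borel_integrable_atLeastAtMost') (intro continuous_intros)

lemma poincare01:
  fixes v g :: "real \<Rightarrow> real" and p :: real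
  assumes V: "w1p0 p 0 1 v g" and p: "1 < p"
  shows "(LINT t:{0..1}|lborel. \<bar>v t\<bar> powr p) \<le> (LINT t:{0..1}|lborel. \<bar>g t\<bar> powr p)"
proof -
  define A where "A = (LINT t:{0..1}|lborel. \<bar>g t\<bar> powr p)"
  define M where "M = (LINT t:{0..1}|lborel. \<bar>g t\<bar>)"
  have gi: "set_integrable lborel {0..1} g" and gpi: "set_integrable lborel {0..1} (\<lambda>t. \<bar>g t\<bar> powr p)"
    using V unfolding w1p0_def by auto
  have gai: "set_integrable lborel {0..1} (\<lambda>t. \<bar>g t\<bar>)" using set_integrable_abs[OF gi] .
  have A0: "0 \<le> A" unfolding A_def set_lebesgue_integral_def
    by (intro integral_nonneg_AE AE_I2) (simp add: indicator_def)
  have M0: "0 \<le> M" unfolding M_def set_lebesgue_integral_def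
    by (intro integral_nonneg_AE AE_I2) (simp add: indicator_def)
  have vM: "\<bar>v x\<bar> \<le> M" if x: "x \<in> {0..1}" for x
  proof -
    have gix: "set_integrable lborel {0..x} g"
      by (rule set_integrable_subset[OF gi]) (use x in auto)
    have "\<bar>v x\<bar> = \<bar>LINT t:{0..x}|lborel. g t\<bar>" using V x unfolding w1p0_def by auto
    also have "\<dots> \<le> (LINT t:{0..x}|lborel. \<bar>g t\<bar>)"
      using set_integral_norm_bound[OF gix] by simp
    also have "\<dots> = integral {0..x} (\<lambda>t. \<bar>g t\<bar>)"
      using set_borel_integral_eq_integral(2)[OF set_integrable_abs[OF gix]] .
    also have "\<dots> \<le> integral {0..1} (\<lambda>t. \<bar>g t\<bar>)"
      by (rule integral_subset_le)
        (use x set_borel_integral_eq_integral(1)[OF set_integrable_abs[OF gix]]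
             set_borel_integral_eq_integral(1)[OF gai] in auto)
    also have "\<dots> = M" unfolding M_def using set_borel_integral_eq_integral(2)[OF gai] by simp
    finally show ?thesis .
  qed
  have MA: "M powr p \<le> A"
  proof (cases "M = 0")
    case True then show ?thesis using A0 by simp
  next
    case False
    then have Mp: "0 < M" using M0 by simp
    have "(LINT t:{0..1}|lborel. \<bar>g t\<bar>) \<le> (LINT t:{0..1}|lborel. \<bar>g t\<bar> powr p / (p * M powr (p - 1)) + M * (p - 1) / p)"
    proof (rule set_integral_mono)
      show "set_integrable lborel {0..1} (\<lambda>t. \<bar>g t\<bar> powr p / (p * M powr (p - 1)) + M * (p - 1) / p)"
        using gpi const_set_integrable by (intro set_integral_add) auto
    qed (use gai young_pt[OF p Mp] in auto)
    then have "M \<le> (LINT t:{0..1}|lborel. \<bar>g t\<bar> powr p / (p * M powr (p - 1)) + M * (p - 1) / p)"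
      unfolding M_def[symmetric] .
    also have "\<dots> = A / (p * M powr (p - 1)) + M * (p - 1) / p"
      using gpi const_set_integrable[of 0 1 "M * (p - 1) / p"]
      by (subst set_integral_add(2)) (auto simp: A_def const_set_integral01 simp del: set_integral_mult_right)
    finally have "M \<le> A / (p * M powr (p - 1)) + M * (p - 1) / p" .
    then have "M / p \<le> A / (p * M powr (p - 1))" using p by (simp add: field_simps)
    then have "M * M powr (p - 1) \<le> A" using p Mp by (simp add: field_simps)
    moreover have "M * M powr (p - 1) = M powr p" using Mp by (simp add: powr_diff field_simps)
    ultimately show ?thesis by simp
  qed
  obtain x0 where True by simp
  have "(LINT t:{0..1}|lborel. \<bar>v t\<bar> powr p) \<le> (LINT t:{0..1::real}|lborel. A)"
  proof (rule set_integral_mono)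
    show "set_integrable lborel {0..1} (\<lambda>t. \<bar>v t\<bar> powr p)"
      using borel_integrable_atLeastAtMost'[OF cont_abs_powr[OF w1p0_cont[OF V]]] p by simp
    show "set_integrable lborel {0..1::real} (\<lambda>t. A)" using const_set_integrable .
    fix t assume "t \<in> {0..1::real}"
    then have "\<bar>v t\<bar> powr p \<le> M powr p" using vM p by (intro powr_mono2) auto
    then show "\<bar>v t\<bar> powr p \<le> A" using MA by simp
  qed
  then show ?thesis unfolding A_def const_set_integral01 .
qed


lemma K_ge1:
  assumes p: "1 < p"
  shows "1 \<le> lambda1 p (\<lambda>_. 1) 0 1"
proof (rule lambda1_greatest)
  fix v g assume V: "w1p0 p 0 1 v g" and Vx: "\<exists>x\<in>{0<..<1::real}. v x \<noteq> 0"
  then obtain x0 where "x0 \<in> {0<..<1::real}" "v x0 \<noteq> 0" by blast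
  then have D: "0 < (LINT t:{0..1}|lborel. \<bar>v t\<bar> powr p)" using w1p0_pos(2)[OF V] p by auto
  have "(LINT t:{0..1}|lborel. \<bar>v t\<bar> powr p) \<le> (LINT t:{0..1}|lborel. \<bar>g t\<bar> powr p)"
    using poincare01[OF V p] .
  with D show "1 \<le> (LINT t:{0..1}|lborel. \<bar>g t\<bar> powr p) / (LINT t:{0..1}|lborel. (\<lambda>_. 1) t * \<bar>v t\<bar> powr p)"
    by simp
qed (use p in auto)

lemma lambda1_eq:
  fixes c d p :: real
  assumes "c < d" "1 < p"
  shows "lambda1 p (\<lambda>_. 1) c d = lambda1 p (\<lambda>_. 1) 0 1 * (d - c) powr (- p)"
proof -
  have "lambda1 p (\<lambda>_. 1) c d * (d - c) powr p \<le> lambda1 p (\<lambda>_. 1) 0 1 * (1 - 0) powr p"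
    by (rule lambda1_scale) (use assms in auto)
  moreover have "lambda1 p (\<lambda>_. 1) 0 1 * (1 - 0) powr p \<le> lambda1 p (\<lambda>_. 1) c d * (d - c) powr p"
    by (rule lambda1_scale) (use assms in auto)
  ultimately have "lambda1 p (\<lambda>_. 1) c d * (d - c) powr p = lambda1 p (\<lambda>_. 1) 0 1" by simp
  then show ?thesis using assms by (simp add: powr_minus_divide field_simps)
qed

lemma lambda1_weight_le:
  fixes c d p th :: real and r :: "real \<Rightarrow> real"
  assumes "c < d" "0 < p" "0 < th" "\<forall>x\<in>{c<..<d}. th \<le> r x"
  shows "th * lambda1 p r c d \<le> lambda1 p (\<lambda>_. 1) c d"
proof (rule lambda1_greatest[OF assms(1,2)])
  fix v g assume V: "w1p0 p c d v g" and Vx: "\<exists>x\<in>{c<..<d}. v x \<noteq> 0"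
  have r0: "\<forall>x\<in>{c<..<d}. 0 \<le> r x" using assms(3,4) by (meson less_le_trans order.strict_implies_order)
  define N where "N = (LINT t:{c..d}|lborel. \<bar>g t\<bar> powr p)"
  define D1 where "D1 = (LINT t:{c..d}|lborel. \<bar>v t\<bar> powr p)"
  define Dr where "Dr = (LINT t:{c..d}|lborel. r t * \<bar>v t\<bar> powr p)"
  have N0: "0 \<le> N" unfolding N_def set_lebesgue_integral_def
    by (intro integral_nonneg_AE AE_I2) (simp add: indicator_def)
  obtain x0 where x0: "x0 \<in> {c<..<d}" "v x0 \<noteq> 0" using Vx by blast
  have D1p: "0 < D1" and vi: "set_integrable lborel {c..d} (\<lambda>t. \<bar>v t\<bar> powr p)"
    using w1p0_pos[OF V assms(2) x0] unfolding D1_def by auto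
  have L: "lambda1 p r c d \<le> N / Dr"
    using lambda1_lower[OF V Vx r0] unfolding N_def Dr_def .
  have "th * lambda1 p r c d \<le> N / D1"
  proof (cases "set_integrable lborel {c..d} (\<lambda>t. r t * \<bar>v t\<bar> powr p)")
    case True
    have "(LINT t:{c..d}|lborel. th * \<bar>v t\<bar> powr p) \<le> Dr"
      unfolding Dr_def
    proof (rule set_integral_mono_AE)
      show "set_integrable lborel {c..d} (\<lambda>t. th * \<bar>v t\<bar> powr p)"
        using vi by (rule set_integrable_mult_right)
      show "AE x\<in>{c..d} in lborel. th * \<bar>v x\<bar> powr p \<le> r x * \<bar>v x\<bar> powr p"
        using AE_not_endpoints[of c d]
      proof eventually_elim
        case (elim x) then show ?case using assms(4) by (auto intro!: mult_right_mono)
      qed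
    qed (use True in auto)
    then have "th * D1 \<le> Dr" unfolding D1_def by simp
    then have "N / Dr \<le> N / (th * D1)"
      using N0 D1p assms(3) by (intro divide_left_mono) (auto intro!: mult_pos_pos, smt (verit) mult_pos_pos)
    then have "th * lambda1 p r c d \<le> th * (N / (th * D1))"
      using L assms(3) by (intro mult_left_mono) auto
    then show ?thesis using assms(3) by simp
  next
    case False
    then have "Dr = 0" unfolding Dr_def set_lebesgue_integral_def set_integrable_def
      by (simp add: not_integrable_integral_eq)
    then have "th * lambda1 p r c d \<le> 0" using L assms(3) by (simp add: mult_nonneg_nonpos)
    also have "0 \<le> N / D1" using N0 D1p by simp
    finally show ?thesis .
  qed
  then show "th * lambda1 p r c d \<le> (LINT t:{c..d}|lborel. \<bar>g t\<bar> powr p) / (LINT t:{c..d}|lborel. (\<lambda>_. 1) t * \<bar>v t\<bar> powr p)"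
    unfolding N_def D1_def by simp
qed

lemma part_mono:
  assumes "partition a b k t" "i \<le> j" "j \<le> Suc k"
  shows "t i \<le> t j"
  using assms(2,3)
proof (induction j)
  case 0 then show ?case by simp
next
  case (Suc j)
  show ?case
  proof (cases "i = Suc j")
    case False
    then have "t i \<le> t j" using Suc by auto
    also have "t j < t (Suc j)" using assms(1) Suc.prems unfolding partition_def by auto
    finally show ?thesis by simp
  qed simp
qed


lemma cpm_upper:
  fixes a b p s th :: real and m n :: "real \<Rightarrow> real"
  assumes ab: "a < b" and p: "1 < p" and s: "0 < s" and th: "0 < th"
    and mn: "\<forall>x\<in>{a<..<b}. th \<le> m x \<and> th \<le> n x"
  shows "cpm pos p m n a b k s \<le> max s 1 * (lambda1 p (\<lambda>_. 1) 0 1 * ((b - a) / real (Suc k)) powr (- p)) / th"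
proof -
  define F where "F = (\<lambda>t. Max ((\<lambda>j. if odd j = pos then s * lambda1 p m (t (j - 1)) (t j)
                                                 else lambda1 p n (t (j - 1)) (t j)) ` {1..Suc k}))"
  define t where "t = (\<lambda>j::nat. a + real j * (b - a) / real (Suc k))"
  define B where "B = max s 1 * (lambda1 p (\<lambda>_. 1) 0 1 * ((b - a) / real (Suc k)) powr (- p)) / th"
  have eq: "cpm pos p m n a b k s = Inf (F ` {t. partition a b k t})"
    unfolding cpm_def F_def ..
  have m0: "\<forall>x\<in>{c<..<d}. 0 \<le> m x" "\<forall>x\<in>{c<..<d}. 0 \<le> n x" if "a \<le> c" "d \<le> b" for c d
    using mn th that by (auto, (meson less_le_trans greaterThanLessThan_iff order.strict_implies_order
        order_less_le_trans order_le_less_trans)+)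
  have part: "partition a b k t"
    unfolding partition_def t_def using ab mult_strict_right_mono[OF ab, of "1 + real k"] by (auto simp: field_simps)
  have bdd: "bdd_below (F ` {t. partition a b k t})"
  proof (rule bdd_belowI[of _ 0], clarify)
    fix t' assume P: "partition a b k t'"
    have t1: "a < t' 1" "t' 1 \<le> b"
      using P part_mono[OF P, of 1 "Suc k"] unfolding partition_def by auto
    have "0 \<le> (if odd (1::nat) = pos then s * lambda1 p m (t' (1 - 1)) (t' 1) else lambda1 p n (t' (1 - 1)) (t' 1))"
      using lambda1_nonneg[of a "t' 1" p m] lambda1_nonneg[of a "t' 1" p n] m0[of a "t' 1"] t1 P p s
      unfolding partition_def by auto
    also have "\<dots> \<le> F t'" unfolding F_def by (rule Max_ge[OF finite_imageI[OF finite_atLeastAtMost] imageI]) auto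
    finally show "0 \<le> F t'" .
  qed
  have "F t \<le> B"
    unfolding F_def
  proof (rule Max.boundedI)
    show "finite ((\<lambda>j. if odd j = pos then s * lambda1 p m (t (j - 1)) (t j) else lambda1 p n (t (j - 1)) (t j)) ` {1..Suc k})" by simp
    show "(\<lambda>j. if odd j = pos then s * lambda1 p m (t (j - 1)) (t j) else lambda1 p n (t (j - 1)) (t j)) ` {1..Suc k} \<noteq> {}" by (simp only: image_is_empty) simp
    fix y assume "y \<in> (\<lambda>j. if odd j = pos then s * lambda1 p m (t (j - 1)) (t j) else lambda1 p n (t (j - 1)) (t j)) ` {1..Suc k}"
    then obtain j where j: "j \<in> {1..Suc k}" and yj: "y = (if odd j = pos then s * lambda1 p m (t (j - 1)) (t j) else lambda1 p n (t (j - 1)) (t j))" by blast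
    then obtain i where i: "j = Suc i" "i \<le> k" by (cases j) auto
    define L where "L = (b - a) / real (Suc k)"
    have L: "0 < L" unfolding L_def using ab by simp
    have cd: "t j - t (j - 1) = L"
    proof -
      have "real (Suc i) * (b - a) - real i * (b - a) = b - a" by (simp add: algebra_simps)
      then have "real (Suc i) * (b - a) / real (Suc k) - real i * (b - a) / real (Suc k) = (b - a) / real (Suc k)"
        by (simp add: diff_divide_distrib[symmetric])
      then show ?thesis unfolding t_def L_def i by simp
    qed
    have ca: "a \<le> t (j - 1)" unfolding t_def i using ab by simp
    have db: "t j \<le> b" unfolding t_def i using ab i mult_left_mono[of "real i" "real k" "b - a"] by (simp add: field_simps algebra_simps)
    have ltj: "t (j - 1) < t j" using cd L by simp
    have l1: "lambda1 p (\<lambda>_. 1) (t (j - 1)) (t j) = lambda1 p (\<lambda>_. 1) 0 1 * L powr (- p)"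
      using lambda1_eq[OF ltj p] cd by simp
    have l1n: "0 \<le> lambda1 p (\<lambda>_. 1) (t (j - 1)) (t j)"
      using lambda1_nonneg[OF ltj] p by simp
    have wm: "th * lambda1 p m (t (j - 1)) (t j) \<le> lambda1 p (\<lambda>_. 1) (t (j - 1)) (t j)"
      by (rule lambda1_weight_le[OF ltj]) (use p th mn ca db in auto)
    have wn: "th * lambda1 p n (t (j - 1)) (t j) \<le> lambda1 p (\<lambda>_. 1) (t (j - 1)) (t j)"
      by (rule lambda1_weight_le[OF ltj]) (use p th mn ca db in auto)
    have Bv: "B = max s 1 * lambda1 p (\<lambda>_. 1) (t (j - 1)) (t j) / th"
      unfolding B_def l1 L_def ..
    have "s * lambda1 p m (t (j - 1)) (t j) \<le> B"
    proof -
      have "lambda1 p m (t (j - 1)) (t j) \<le> lambda1 p (\<lambda>_. 1) (t (j - 1)) (t j) / th"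
        using wm th by (simp add: field_simps)
      then have "s * lambda1 p m (t (j - 1)) (t j) \<le> s * (lambda1 p (\<lambda>_. 1) (t (j - 1)) (t j) / th)"
        using s by (intro mult_left_mono) auto
      also have "\<dots> \<le> max s 1 * (lambda1 p (\<lambda>_. 1) (t (j - 1)) (t j) / th)"
        using l1n th by (intro mult_right_mono) auto
      finally show ?thesis unfolding Bv by simp
    qed
    moreover have "lambda1 p n (t (j - 1)) (t j) \<le> B"
    proof -
      have "lambda1 p n (t (j - 1)) (t j) \<le> 1 * (lambda1 p (\<lambda>_. 1) (t (j - 1)) (t j) / th)"
        using wn th by (simp add: field_simps)
      also have "\<dots> \<le> max s 1 * (lambda1 p (\<lambda>_. 1) (t (j - 1)) (t j) / th)"
        using l1n th by (intro mult_right_mono) auto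
      finally show ?thesis unfolding Bv by simp
    qed
    ultimately show "y \<le> B" unfolding yj by simp
  qed
  moreover have "cpm pos p m n a b k s \<le> F t"
    unfolding eq by (rule cInf_lower) (use part bdd in auto)
  ultimately show ?thesis unfolding B_def by simp
qed


lemma cpm_nonneg:
  fixes a b p s th :: real and m n :: "real \<Rightarrow> real"
  assumes ab: "a < b" and p: "1 < p" and s: "0 < s" and th: "0 < th"
    and mn: "\<forall>x\<in>{a<..<b}. th \<le> m x \<and> th \<le> n x"
  shows "0 \<le> cpm pos p m n a b k s"
proof -
  define F where "F = (\<lambda>t. Max ((\<lambda>j. if odd j = pos then s * lambda1 p m (t (j - 1)) (t j)
                                                 else lambda1 p n (t (j - 1)) (t j)) ` {1..Suc k}))"
  define t where "t = (\<lambda>j::nat. a + real j * (b - a) / real (Suc k))"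
  have eq: "cpm pos p m n a b k s = Inf (F ` {t. partition a b k t})"
    unfolding cpm_def F_def ..
  have m0: "\<forall>x\<in>{c<..<d}. 0 \<le> m x" "\<forall>x\<in>{c<..<d}. 0 \<le> n x" if "a \<le> c" "d \<le> b" for c d
    using mn th that by (auto, (meson less_le_trans greaterThanLessThan_iff order.strict_implies_order
        order_less_le_trans order_le_less_trans)+)
  have part: "partition a b k t"
    unfolding partition_def t_def using ab mult_strict_right_mono[OF ab, of "1 + real k"] by (auto simp: field_simps)
  show ?thesis unfolding eq
  proof (rule cInf_greatest, use part in blast, clarify)
    fix t' assume P: "partition a b k t'"
    have t1: "a < t' 1" "t' 1 \<le> b"
      using P part_mono[OF P, of 1 "Suc k"] unfolding partition_def by auto
    have "0 \<le> (if odd (1::nat) = pos then s * lambda1 p m (t' (1 - 1)) (t' 1) else lambda1 p n (t' (1 - 1)) (t' 1))"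
      using lambda1_nonneg[of a "t' 1" p m] lambda1_nonneg[of a "t' 1" p n] m0[of a "t' 1"] t1 P p s
      unfolding partition_def by auto
    also have "\<dots> \<le> F t'" unfolding F_def by (rule Max_ge[OF finite_imageI[OF finite_atLeastAtMost] imageI]) auto
    finally show "0 \<le> F t'" .
  qed
qed

lemma nodal_endpoints:
  fixes u :: "real \<Rightarrow> real"
  assumes N: "nodal_domain True u a b c d" and cu: "continuous_on {a..b} u" and ua: "u a = 0" and ub: "u b = 0"
  shows "u c = 0" "u d = 0"
proof -
  have cd: "c < d" "a \<le> c" "d \<le> b" and pos: "\<forall>x\<in>{c<..<d}. u x > 0"
    and mx: "\<And>c' d'. c' \<le> c \<Longrightarrow> d \<le> d' \<Longrightarrow> a \<le> c' \<Longrightarrow> d' \<le> b \<Longrightarrow>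
        (\<forall>x\<in>{c'<..<d'}. u x > 0) \<Longrightarrow> c' = c \<and> d' = d"
    using N unfolding nodal_domain_def by auto
  show "u c = 0"
  proof (rule ccontr)
    assume nz: "u c \<noteq> 0"
    then have ac: "a < c" using ua cd by (cases "a = c") auto
    have "c \<in> {a..b}" using cd by auto
    then obtain \<delta> where \<delta>: "\<delta> > 0" "\<And>y. y \<in> {a..b} \<Longrightarrow> dist y c < \<delta> \<Longrightarrow> dist (u y) (u c) < \<bar>u c\<bar>"
      using cu nz unfolding continuous_on_iff by (metis zero_less_abs_iff)
    define e where "e = min \<delta> (d - c)"
    define y1 where "y1 = c + e / 2"
    have mm: "0 < e" "e \<le> d - c" "e \<le> \<delta>" using \<delta>(1) cd unfolding e_def by auto
    have y1: "y1 \<in> {c<..<d}" "y1 \<in> {a..b}" "dist y1 c < \<delta>" using mm cd unfolding y1_def dist_real_def by auto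
    have "u y1 > 0" using pos y1 by auto
    moreover have "\<bar>u y1 - u c\<bar> < \<bar>u c\<bar>" using \<delta>(2)[OF y1(2,3)] by (simp add: dist_real_def)
    ultimately have ucp: "u c > 0" by linarith
    define c' where "c' = max a (c - \<delta> / 2)"
    have "c' = c \<and> d = d"
    proof (rule mx)
      show "\<forall>x\<in>{c'<..<d}. u x > 0"
      proof
        fix x assume x: "x \<in> {c'<..<d}"
        show "u x > 0"
        proof (cases "x \<le> c")
          case True
          then have "x \<in> {a..b}" "dist x c < \<delta>" using x cd \<delta> unfolding c'_def by (auto simp: dist_real_def)
          then have "\<bar>u x - u c\<bar> < \<bar>u c\<bar>" using \<delta>(2) by (simp add: dist_real_def)
          then show ?thesis using ucp by linarith
        next
          case False then show ?thesis using x pos by auto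
        qed
      qed
    qed (use cd \<delta>(1) in \<open>auto simp: c'_def\<close>)
    moreover have "c' < c" unfolding c'_def using ac \<delta> by auto
    ultimately show False by simp
  qed
  show "u d = 0"
  proof (rule ccontr)
    assume nz: "u d \<noteq> 0"
    then have db: "d < b" using ub cd by (cases "d = b") auto
    have "d \<in> {a..b}" using cd by auto
    then obtain \<delta> where \<delta>: "\<delta> > 0" "\<And>y. y \<in> {a..b} \<Longrightarrow> dist y d < \<delta> \<Longrightarrow> dist (u y) (u d) < \<bar>u d\<bar>"
      using cu nz unfolding continuous_on_iff by (metis zero_less_abs_iff)
    define e where "e = min \<delta> (d - c)"
    define y1 where "y1 = d - e / 2"
    have mm: "0 < e" "e \<le> d - c" "e \<le> \<delta>" using \<delta>(1) cd unfolding e_def by auto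
    have y1: "y1 \<in> {c<..<d}" "y1 \<in> {a..b}" "dist y1 d < \<delta>" using mm cd unfolding y1_def dist_real_def by auto
    have "u y1 > 0" using pos y1 by auto
    moreover have "\<bar>u y1 - u d\<bar> < \<bar>u d\<bar>" using \<delta>(2)[OF y1(2,3)] by (simp add: dist_real_def)
    ultimately have ucp: "u d > 0" by linarith
    define d' where "d' = min b (d + \<delta> / 2)"
    have "c = c \<and> d' = d"
    proof (rule mx)
      show "\<forall>x\<in>{c<..<d'}. u x > 0"
      proof
        fix x assume x: "x \<in> {c<..<d'}"
        show "u x > 0"
        proof (cases "d \<le> x")
          case True
          then have "x \<in> {a..b}" "dist x d < \<delta>" using x cd \<delta> unfolding d'_def by (auto simp: dist_real_def)
          then have "\<bar>u x - u d\<bar> < \<bar>u d\<bar>" using \<delta>(2) by (simp add: dist_real_def)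
          then show ?thesis using ucp by linarith
        next
          case False then show ?thesis using x pos by auto
        qed
      qed
    qed (use cd \<delta>(1) in \<open>auto simp: d'_def\<close>)
    moreover have "d < d'" unfolding d'_def using db \<delta> by auto
    ultimately show False by simp
  qed
qed


lemma w1p0_diff:
  assumes U: "w1p0 p a b u g" and "a \<le> c" "c \<le> x" "x \<le> b"
  shows "u x = u c + integral {c..x} g"
proof -
  have gi: "g integrable_on {a..x}"
    using integrable_on_subinterval[OF w1p0_integrable_on[OF U]] assms by auto
  have "u x = integral {a..x} g" using w1p0_integral[OF U] assms by auto
  also have "\<dots> = integral {a..c} g + integral {c..x} g"
    using Henstock_Kurzweil_Integration.integral_combine[OF assms(2,3) gi] by simp
  also have "integral {a..c} g = u c" using w1p0_integral[OF U] assms by auto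
  finally show ?thesis .
qed

lemma w1p0_restrict:
  assumes U: "w1p0 p a b u g" and cd: "a \<le> c" "c < d" "d \<le> b" and uc: "u c = 0" and ud: "u d = 0"
  shows "w1p0 p c d u g"
  unfolding w1p0_def
proof (intro conjI ballI)
  have gi: "set_integrable lborel {a..b} g" and gpi: "set_integrable lborel {a..b} (\<lambda>t. \<bar>g t\<bar> powr p)"
    using U unfolding w1p0_def by auto
  show "set_integrable lborel {c..d} g" by (rule set_integrable_subset[OF gi]) (use cd in auto)
  then have gcd: "set_integrable lborel {c..x} g" if "x \<in> {c..d}" for x
    by (rule set_integrable_subset) (use that in auto)
  show "set_integrable lborel {c..d} (\<lambda>t. \<bar>g t\<bar> powr p)" by (rule set_integrable_subset[OF gpi]) (use cd in auto)
  show "u c = 0" "u d = 0" using uc ud .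
  fix x assume x: "x \<in> {c..d}"
  have "u x = u c + integral {c..x} g" using w1p0_diff[OF U, of c x] x cd by auto
  also have "\<dots> = (LINT t:{c..x}|lborel. g t)" using uc set_borel_integral_eq_integral(2)[OF gcd[OF x]] by simp
  finally show "u x = (LINT t:{c..x}|lborel. g t)" .
qed

lemma w1p0_trunc:
  fixes u g :: "real \<Rightarrow> real"
  assumes U: "w1p0 p a b u g" and cd: "a \<le> c" "c < d" "d \<le> b" and uc: "u c = 0" and ud: "u d = 0"
  shows "w1p0 p a b (\<lambda>x. if x \<in> {c..d} then u x else 0) (\<lambda>x. indicator {c..d} x * g x)"
  unfolding w1p0_def
proof (intro conjI ballI)
  have gi: "set_integrable lborel {a..b} g" and gpi: "set_integrable lborel {a..b} (\<lambda>t. \<bar>g t\<bar> powr p)"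
    using U unfolding w1p0_def by auto
  have gcd: "set_integrable lborel {c..d} g" by (rule set_integrable_subset[OF gi]) (use cd in auto)
  have gpcd: "set_integrable lborel {c..d} (\<lambda>t. \<bar>g t\<bar> powr p)" by (rule set_integrable_subset[OF gpi]) (use cd in auto)
  have ind: "indicator {a..b} x * indicator {c..d} x = (indicator {c..d} x :: real)" for x
    using cd by (auto simp: indicator_def)
  show si: "set_integrable lborel {a..b} (\<lambda>x. indicator {c..d} x * g x)"
    using gcd unfolding set_integrable_def by (simp add: mult.assoc[symmetric] ind)
  have eqf: "(\<lambda>x. indicator {a..b} x *\<^sub>R \<bar>indicator {c..d} x * g x\<bar> powr p) = (\<lambda>x. indicator {c..d} x *\<^sub>R \<bar>g x\<bar> powr p)"
    using cd by (auto simp: indicator_def)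
  show "set_integrable lborel {a..b} (\<lambda>x. \<bar>indicator {c..d} x * g x\<bar> powr p)"
    using gpcd unfolding set_integrable_def eqf .
  show "(if a \<in> {c..d} then u a else 0) = 0" using cd uc by auto
  show "(if b \<in> {c..d} then u b else 0) = 0" using cd ud by auto
  fix x assume x: "x \<in> {a..b}"
  have six: "set_integrable lborel {a..x} (\<lambda>x. indicator {c..d} x * g x)"
    by (rule set_integrable_subset[OF si]) (use x in auto)
  have "(LINT t:{a..x}|lborel. indicator {c..d} t * g t) = integral {a..x} (\<lambda>t. indicator {c..d} t * g t)"
    using set_borel_integral_eq_integral(2)[OF six] .
  also have "\<dots> = integral {a..x} (\<lambda>t. if t \<in> {c..d} then g t else 0)"
    by (rule integral_cong) (auto simp: indicator_def)
  also have "\<dots> = integral ({c..d} \<inter> {a..x}) g" by (rule integral_restrict_Int)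
  also have "\<dots> = (if x \<in> {c..d} then u x else 0)"
  proof (cases "x < c")
    case True
    then have "{c..d} \<inter> {a..x} = {}" by auto
    then show ?thesis using True by simp
  next
    case False
    show ?thesis
    proof (cases "x \<le> d")
      case True
      then have "{c..d} \<inter> {a..x} = {c..x}" using False cd by auto
      then show ?thesis using w1p0_diff[OF U, of c x] uc False True cd by auto
    next
      case False2: False
      then have "{c..d} \<inter> {a..x} = {c..d}" using False cd by auto
      then show ?thesis using w1p0_diff[OF U, of c d] uc ud False2 cd by auto
    qed
  qed
  finally show "(if x \<in> {c..d} then u x else 0) = (LINT t:{a..x}|lborel. indicator {c..d} t * g t)" by simp
qed

lemma LINT_sub_indicator:
  fixes f :: "real \<Rightarrow> real"
  assumes "a \<le> c" "d \<le> b"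
  shows "(LINT x:{a..b}|lborel. indicator {c..d} x * f x) = (LINT x:{c..d}|lborel. f x)"
  unfolding set_lebesgue_integral_def
  by (rule Bochner_Integration.integral_cong) (use assms in \<open>auto simp: indicator_def\<close>)

lemma powr_pm2: "1 < p \<Longrightarrow> \<bar>y\<bar> powr (p - 2) * y * y = \<bar>y::real\<bar> powr p"
proof -
  have "\<bar>y\<bar> powr (p - 2) * \<bar>y\<bar> powr 2 = \<bar>y\<bar> powr (p - 2 + 2)" by (simp only: powr_add)
  moreover have "\<bar>y\<bar> powr 2 = y * y" by (simp add: power2_eq_square[symmetric])
  ultimately show ?thesis by (simp add: mult.assoc)
qed

lemma powr_pm1: "0 \<le> y \<Longrightarrow> y powr (p - 1) * y = (y::real) powr p"
proof -
  assume y: "0 \<le> y"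
  have "y powr (p - 1) * y powr 1 = y powr (p - 1 + 1)" by (simp only: powr_add)
  then show ?thesis using y by (simp add: powr_one)
qed


lemma domain_bound:
  fixes u g r :: "real \<Rightarrow> real"
  assumes U: "w1p0 p a b u g" and p: "1 < p" and cd: "a \<le> c" "c < d" "d \<le> b"
    and uc: "u c = 0" and ud: "u d = 0" and x0: "x0 \<in> {c<..<d}" "u x0 \<noteq> 0"
    and r: "\<forall>x\<in>{a<..<b}. r x \<le> th" and th: "0 \<le> th" and L: "0 \<le> \<Lambda>"
    and eq: "(LINT t:{c..d}|lborel. \<bar>g t\<bar> powr p) = \<Lambda> * (LINT t:{c..d}|lborel. r t * \<bar>u t\<bar> powr p)"
  shows "lambda1 p (\<lambda>_. 1) 0 1 * (d - c) powr (- p) \<le> \<Lambda> * th"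
proof -
  have Ur: "w1p0 p c d u g" using w1p0_restrict[OF U cd uc ud] .
  define N where "N = (LINT t:{c..d}|lborel. \<bar>g t\<bar> powr p)"
  define D1 where "D1 = (LINT t:{c..d}|lborel. \<bar>u t\<bar> powr p)"
  define Dr where "Dr = (LINT t:{c..d}|lborel. r t * \<bar>u t\<bar> powr p)"
  have D1p: "0 < D1" and ui: "set_integrable lborel {c..d} (\<lambda>t. \<bar>u t\<bar> powr p)"
    using w1p0_pos[OF Ur _ x0] p unfolding D1_def by auto
  have "lambda1 p (\<lambda>_. 1) c d \<le> N / D1"
    using lambda1_lower[OF Ur, of "\<lambda>_. 1"] x0 unfolding N_def D1_def by force
  moreover have "lambda1 p (\<lambda>_. 1) c d = lambda1 p (\<lambda>_. 1) 0 1 * (d - c) powr (- p)"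
    using lambda1_eq[OF cd(2) p] .
  moreover have "Dr \<le> th * D1"
  proof (cases "set_integrable lborel {c..d} (\<lambda>t. r t * \<bar>u t\<bar> powr p)")
    case True
    have "Dr \<le> (LINT t:{c..d}|lborel. th * \<bar>u t\<bar> powr p)"
      unfolding Dr_def
    proof (rule set_integral_mono_AE)
      show "set_integrable lborel {c..d} (\<lambda>t. th * \<bar>u t\<bar> powr p)"
        using ui by (rule set_integrable_mult_right)
      show "AE x\<in>{c..d} in lborel. r x * \<bar>u x\<bar> powr p \<le> th * \<bar>u x\<bar> powr p"
        using AE_not_endpoints[of a b]
      proof eventually_elim
        case (elim x) then show ?case using r cd by (auto intro!: mult_right_mono)
      qed
    qed (use True in auto)
    then show ?thesis unfolding D1_def by simp
  next
    case False
    then have "Dr = 0" unfolding Dr_def set_lebesgue_integral_def set_integrable_def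
      by (simp add: not_integrable_integral_eq)
    then show ?thesis using th D1p by simp
  qed
  ultimately have "lambda1 p (\<lambda>_. 1) 0 1 * (d - c) powr (- p) \<le> \<Lambda> * Dr / D1"
    using eq unfolding N_def Dr_def by simp
  also have "\<Lambda> * Dr / D1 \<le> \<Lambda> * (th * D1) / D1"
    using \<open>Dr \<le> th * D1\<close> L D1p by (intro divide_right_mono mult_left_mono) auto
  also have "\<dots> = \<Lambda> * th" using D1p by simp
  finally show ?thesis .
qed

lemma L0_powr:
  fixes a b p :: real
  assumes "a < b"
  shows "((b - a) / real (Suc k)) powr (- p) = real (k + 1) powr p * (b - a) powr (- p)"
  using assms by (simp add: powr_divide powr_minus field_simps)

lemma nodal_neg: "nodal_domain False u a b c d \<longleftrightarrow> nodal_domain True (\<lambda>x. - u x) a b c d"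
  unfolding nodal_domain_def by simp


theorem lemma4p5:
  fixes a b p s th_m th_p :: real and k :: nat and pos :: bool
    and m n u g :: "real \<Rightarrow> real" and cp dp cn dn :: real
  assumes "a < b" and "1 < p" and "1 \<le> k"
    and "set_borel_measurable lborel {a<..<b} m"
    and "set_borel_measurable lborel {a<..<b} n"
    and "0 < th_m"
    and "\<forall>x\<in>{a<..<b}. th_m \<le> m x \<and> m x \<le> th_p \<and> th_m \<le> n x \<and> n x \<le> th_p"
    and "0 < s"
    and "w1p0 p a b u g"
    and "\<exists>x\<in>{a<..<b}. u x \<noteq> 0"
    and "\<forall>\<phi> \<psi>. w1p0 p a b \<phi> \<psi> \<longrightarrow>
           (LINT x:{a..b}|lborel. \<bar>g x\<bar> powr (p - 2) * g x * \<psi> x) =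
           (LINT x:{a..b}|lborel.
              (cpm pos p m n a b k s / s * m x * (max (u x) 0) powr (p - 1)
               - cpm pos p m n a b k s * n x * (max (- u x) 0) powr (p - 1)) * \<phi> x)"
    and "nodal_domain True u a b cp dp"
    and "nodal_domain False u a b cn dn"
  shows "mu1 p (dp - cp) \<le> th_p / th_m * (pi_p p powr p * real (k + 1) powr p * (b - a) powr (- p)) * gamma s
       \<and> mu1 p (dn - cn) \<le> th_p / th_m * (pi_p p powr p * real (k + 1) powr p * (b - a) powr (- p)) * s * gamma s"
proof -
  note ab = assms(1) and p = assms(2) and thM = assms(6) and bnd = assms(7) and s = assms(8)
    and U = assms(9) and weak = assms(11) and NP = assms(12) and NN = assms(13)
  define A where "A = cpm pos p m n a b k s"
  define K where "K = lambda1 p (\<lambda>_. 1) 0 1"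
  define Z where "Z = real (k + 1) powr p * (b - a) powr (- p)"
  define P where "P = pi_p p powr p"
  have P0: "0 \<le> P" unfolding P_def by simp
  have K1: "1 \<le> K" unfolding K_def using K_ge1[OF p] .
  have "(a + b) / 2 \<in> {a<..<b}" using ab by auto
  then have thp: "th_m \<le> th_p" using bnd by fastforce
  have mn: "\<forall>x\<in>{a<..<b}. th_m \<le> m x \<and> th_m \<le> n x" using bnd by auto
  have A0: "0 \<le> A" unfolding A_def by (rule cpm_nonneg[OF ab p s thM mn])
  have Aup: "A \<le> max s 1 * (K * Z) / th_m"
    using cpm_upper[OF ab p s thM mn, of pos k] L0_powr[OF ab, of k p] unfolding A_def K_def Z_def by simp
  have cu: "continuous_on {a..b} u" using w1p0_cont[OF U] .
  have ua: "u a = 0" and ub: "u b = 0" using U unfolding w1p0_def by auto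
  have gam: "max s 1 / s = gamma s" "s * gamma s = max s 1" using s unfolding gamma_def by auto
  have Z0: "0 \<le> Z" unfolding Z_def by simp
  have key: "X \<le> th_p / th_m * Z * G" if "K * X \<le> A * C" "C * max s 1 = th_p * G" "0 \<le> C" for X C G
  proof -
    have "K * X \<le> (max s 1 * (K * Z) / th_m) * C" using that(1,3) Aup A0 by (meson mult_right_mono order_trans)
    also have "\<dots> = K * (th_p / th_m * Z * G)" using that(2) thM by (simp add: field_simps)
    finally have h: "K * X \<le> K * (th_p / th_m * Z * G)" .
    have "0 < K" using K1 by simp
    then show ?thesis using h mult_le_cancel_left_pos by blast
  qed
  have "mu1 p (dp - cp) \<le> th_p / th_m * (P * Z) * gamma s"
  proof -
    have cd: "a \<le> cp" "cp < dp" "dp \<le> b" and posd: "\<forall>x\<in>{cp<..<dp}. u x > 0"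
      using NP unfolding nodal_domain_def by auto
    have uc: "u cp = 0" and ud: "u dp = 0" using nodal_endpoints[OF NP cu ua ub] by auto
    have un: "0 \<le> u x" if "x \<in> {cp..dp}" for x
      using that posd uc ud by (cases "x = cp \<or> x = dp") (auto intro: less_imp_le)
    have T: "w1p0 p a b (\<lambda>x. if x \<in> {cp..dp} then u x else 0) (\<lambda>x. indicator {cp..dp} x * g x)"
      using w1p0_trunc[OF U cd uc ud] .
    have W: "(LINT x:{a..b}|lborel. \<bar>g x\<bar> powr (p - 2) * g x * (indicator {cp..dp} x * g x)) =
           (LINT x:{a..b}|lborel. (A / s * m x * (max (u x) 0) powr (p - 1) - A * n x * (max (- u x) 0) powr (p - 1))
              * (if x \<in> {cp..dp} then u x else 0))"
      using weak T unfolding A_def by blast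
    have l: "(\<lambda>x. \<bar>g x\<bar> powr (p - 2) * g x * (indicator {cp..dp} x * g x)) = (\<lambda>x. indicator {cp..dp} x * \<bar>g x\<bar> powr p)"
    proof (rule ext)
      fix x
      have "\<bar>g x\<bar> powr (p - 2) * g x * (indicator {cp..dp} x * g x) = indicator {cp..dp} x * (\<bar>g x\<bar> powr (p - 2) * g x * g x)"
        by (simp only: mult_ac)
      then show "\<bar>g x\<bar> powr (p - 2) * g x * (indicator {cp..dp} x * g x) = indicator {cp..dp} x * \<bar>g x\<bar> powr p"
        using powr_pm2[OF p, of "g x"] by simp
    qed
    have r: "(\<lambda>x. (A / s * m x * (max (u x) 0) powr (p - 1) - A * n x * (max (- u x) 0) powr (p - 1))
              * (if x \<in> {cp..dp} then u x else 0)) = (\<lambda>x. indicator {cp..dp} x * (A / s * (m x * \<bar>u x\<bar> powr p)))"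
    proof
      fix x show "(A / s * m x * (max (u x) 0) powr (p - 1) - A * n x * (max (- u x) 0) powr (p - 1))
              * (if x \<in> {cp..dp} then u x else 0) = indicator {cp..dp} x * (A / s * (m x * \<bar>u x\<bar> powr p))"
      proof (cases "x \<in> {cp..dp}")
        case True
        then have u0: "0 \<le> u x" using un by auto
        then have "max (u x) 0 = u x" "max (- u x) 0 = 0" "\<bar>u x\<bar> = u x" by auto
        then show ?thesis using True powr_pm1[OF u0, of p] by (simp add: mult.assoc)
      qed (auto simp: indicator_def)
    qed
    have eq: "(LINT t:{cp..dp}|lborel. \<bar>g t\<bar> powr p) = A / s * (LINT t:{cp..dp}|lborel. m t * \<bar>u t\<bar> powr p)"
      using W unfolding l r LINT_sub_indicator[OF cd(1,3)] by simp
    obtain x0 where x0: "x0 \<in> {cp<..<dp}" "u x0 \<noteq> 0" using posd cd(2)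
      by (metis dense greaterThanLessThan_iff less_irrefl)
    have "K * (dp - cp) powr (- p) \<le> A / s * th_p"
      unfolding K_def
      by (rule domain_bound[OF U p cd uc ud x0, where r=m and th=th_p and \<Lambda>="A / s"]) (use bnd thp thM A0 s eq in auto)
    then have "K * (dp - cp) powr (- p) \<le> A * (th_p / s)" by simp
    then have "(dp - cp) powr (- p) \<le> th_p / th_m * Z * gamma s"
      by (rule key) (use gam s thp thM in \<open>auto simp: field_simps\<close>)
    then have "P * (dp - cp) powr (- p) \<le> P * (th_p / th_m * Z * gamma s)"
      using P0 by (intro mult_left_mono)
    then show ?thesis unfolding mu1_def P_def by (simp add: ac_simps)
  qed
  moreover
  have "mu1 p (dn - cn) \<le> th_p / th_m * (P * Z) * s * gamma s"
  proof -
    have NN': "nodal_domain True (\<lambda>x. - u x) a b cn dn" using NN nodal_neg by blast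
    have cd: "a \<le> cn" "cn < dn" "dn \<le> b" and negd: "\<forall>x\<in>{cn<..<dn}. u x < 0"
      using NN unfolding nodal_domain_def by auto
    have "- u cn = 0" "- u dn = 0"
      using nodal_endpoints[OF NN' continuous_on_minus[OF cu]] ua ub by auto
    then have uc: "u cn = 0" and ud: "u dn = 0" by auto
    have un: "u x \<le> 0" if "x \<in> {cn..dn}" for x
      using that negd uc ud by (cases "x = cn \<or> x = dn") (auto intro: less_imp_le)
    have T: "w1p0 p a b (\<lambda>x. if x \<in> {cn..dn} then u x else 0) (\<lambda>x. indicator {cn..dn} x * g x)"
      using w1p0_trunc[OF U cd uc ud] .
    have W: "(LINT x:{a..b}|lborel. \<bar>g x\<bar> powr (p - 2) * g x * (indicator {cn..dn} x * g x)) =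
           (LINT x:{a..b}|lborel. (A / s * m x * (max (u x) 0) powr (p - 1) - A * n x * (max (- u x) 0) powr (p - 1))
              * (if x \<in> {cn..dn} then u x else 0))"
      using weak T unfolding A_def by blast
    have l: "(\<lambda>x. \<bar>g x\<bar> powr (p - 2) * g x * (indicator {cn..dn} x * g x)) = (\<lambda>x. indicator {cn..dn} x * \<bar>g x\<bar> powr p)"
    proof (rule ext)
      fix x
      have "\<bar>g x\<bar> powr (p - 2) * g x * (indicator {cn..dn} x * g x) = indicator {cn..dn} x * (\<bar>g x\<bar> powr (p - 2) * g x * g x)"
        by (simp only: mult_ac)
      then show "\<bar>g x\<bar> powr (p - 2) * g x * (indicator {cn..dn} x * g x) = indicator {cn..dn} x * \<bar>g x\<bar> powr p"
        using powr_pm2[OF p, of "g x"] by simp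
    qed
    have r: "(\<lambda>x. (A / s * m x * (max (u x) 0) powr (p - 1) - A * n x * (max (- u x) 0) powr (p - 1))
              * (if x \<in> {cn..dn} then u x else 0)) = (\<lambda>x. indicator {cn..dn} x * (A * (n x * \<bar>u x\<bar> powr p)))"
    proof
      fix x show "(A / s * m x * (max (u x) 0) powr (p - 1) - A * n x * (max (- u x) 0) powr (p - 1))
              * (if x \<in> {cn..dn} then u x else 0) = indicator {cn..dn} x * (A * (n x * \<bar>u x\<bar> powr p))"
      proof (cases "x \<in> {cn..dn}")
        case True
        then have u0: "0 \<le> - u x" using un by auto
        then have "max (u x) 0 = 0" "max (- u x) 0 = - u x" "\<bar>u x\<bar> = - u x" by auto
        moreover have e: "(- u x) powr (p - 1) * u x = - ((- u x) powr p)"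
          using powr_pm1[OF u0, of p] by (simp add: mult_minus_right)
        ultimately show ?thesis using True by (simp add: mult.assoc e)
      qed (auto simp: indicator_def)
    qed
    have eq: "(LINT t:{cn..dn}|lborel. \<bar>g t\<bar> powr p) = A * (LINT t:{cn..dn}|lborel. n t * \<bar>u t\<bar> powr p)"
      using W unfolding l r LINT_sub_indicator[OF cd(1,3)] by simp
    obtain x0 where x0: "x0 \<in> {cn<..<dn}" "u x0 \<noteq> 0" using negd cd(2)
      by (metis dense greaterThanLessThan_iff less_irrefl)
    have "K * (dn - cn) powr (- p) \<le> A * th_p"
      unfolding K_def
      by (rule domain_bound[OF U p cd uc ud x0, where r=n and th=th_p and \<Lambda>=A]) (use bnd thp thM A0 s eq in auto)
    then have "(dn - cn) powr (- p) \<le> th_p / th_m * Z * (s * gamma s)"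
      by (rule key) (use gam s thp thM in \<open>auto simp: field_simps\<close>)
    then have "P * (dn - cn) powr (- p) \<le> P * (th_p / th_m * Z * (s * gamma s))"
      using P0 by (intro mult_left_mono)
    then show ?thesis unfolding mu1_def P_def by (simp add: ac_simps)
  qed
  ultimately show ?thesis unfolding P_def Z_def by (simp add: ac_simps)
qed

end
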